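(* Let $P_n$ denote the path on $n$ vertices. Then for every $n\ge 3$, $f(P_n)=\left\lfloor\frac{n}{2}\right\rfloor$.
   Context: For a graph $G$, a family $\mathcal{P}$ of subsets of $E(G)$ is a separating path system of $G$ if every member is (the edge set of) a path in $G$ and for every pair of distinct edges $e,e'$ some $P\in\mathcal{P}$ contains exactly one of $e,e'$; $f(G)$ is the minimum size of a separating path system of $G$. *)

theory Defs
  imports Main
begin

text \<open>Simple graphs are given by a vertex set V and an edge set E of 2-element subsets of V.\<close>

definition path_edges :: "'a set \<Rightarrow> 'a set set \<Rightarrow> 'a set set \<Rightarrow> bool" where
  "path_edges V E P \<longleftrightarrow>
     (\<exists>xs. xs \<noteq> [] \<and> distinct xs \<and> set xs \<subseteq> V \<and>
        (\<forall>i. Suc i < length xs \<longrightarrow> {xs ! i, xs ! Suc i} \<in> E) \<and>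
        P = {{xs ! i, xs ! Suc i} | i. Suc i < length xs})"

definition separating_path_system :: "'a set \<Rightarrow> 'a set set \<Rightarrow> 'a set set set \<Rightarrow> bool" where
  "separating_path_system V E \<P> \<longleftrightarrow>
     (\<forall>P\<in>\<P>. path_edges V E P) \<and>
     (\<forall>e\<in>E. \<forall>e'\<in>E. e \<noteq> e' \<longrightarrow> (\<exists>P\<in>\<P>. (e \<in> P) \<noteq> (e' \<in> P)))"

definition f_sep :: "'a set \<Rightarrow> 'a set set \<Rightarrow> nat" where
  "f_sep V E = (LEAST k. \<exists>\<P>. finite \<P> \<and> card \<P> = k \<and> separating_path_system V E \<P>)"

definition path_graph_V :: "nat \<Rightarrow> nat set" where
  "path_graph_V n = {0..<n}"

definition path_graph_E :: "nat \<Rightarrow> nat set set" where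
  "path_graph_E n = {{i, Suc i} | i. Suc i < n}"

end

theory Submission imports Defs begin

lemma dbl: "{x,y} = {i, Suc i::nat} \<longleftrightarrow> (x = i \<and> y = Suc i) \<or> (x = Suc i \<and> y = i)"
  by (auto simp: doubleton_eq_iff)

lemma step_dir:
  assumes "distinct xs" "\<forall>i. Suc i < length xs \<longrightarrow> (xs!Suc i = Suc (xs!i) \<or> xs!i = Suc (xs!Suc i))"
  shows "(\<forall>i. Suc i < length xs \<longrightarrow> xs!Suc i = Suc (xs!i)) \<or> (\<forall>i. Suc i < length xs \<longrightarrow> xs!i = Suc (xs!Suc i))"
  using assms
proof (induction xs)
  case Nil
  then show ?case by simp
next
  case (Cons x xs)
  have d: "distinct xs" using Cons.prems by auto
  have st: "\<forall>i. Suc i < length xs \<longrightarrow> (xs!Suc i = Suc (xs!i) \<or> xs!i = Suc (xs!Suc i))"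
  proof (intro allI impI)
    fix i assume "Suc i < length xs"
    then have "Suc (Suc i) < length (x#xs)" by simp
    then show "xs!Suc i = Suc (xs!i) \<or> xs!i = Suc (xs!Suc i)" using Cons.prems(2) by fastforce
  qed
  note IH = Cons.IH[OF d st]
  show ?case
  proof (cases "length xs \<le> 1")
    case True
    then show ?thesis using Cons.prems(2) by (auto simp: less_Suc_eq nth_Cons split: nat.splits)
  next
    case False
    have x0: "xs!0 = Suc x \<or> x = Suc (xs!0)" using Cons.prems(2) False by (metis Suc_less_eq length_Cons nth_Cons_0 nth_Cons_Suc not_le zero_less_Suc less_trans_Suc zero_less_one)
    have nx: "x \<noteq> xs!1" using Cons.prems(1) False by auto
    from IH show ?thesis
    proof
      assume inc: "\<forall>i. Suc i < length xs \<longrightarrow> xs!Suc i = Suc (xs!i)"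
      then have "xs!1 = Suc (xs!0)" using False by auto
      then have "xs!0 = Suc x" using x0 nx by auto
      then show ?thesis using inc by (auto simp: nth_Cons split: nat.splits)
    next
      assume dec: "\<forall>i. Suc i < length xs \<longrightarrow> xs!i = Suc (xs!Suc i)"
      then have "xs!0 = Suc (xs!1)" using False by auto
      then have "x = Suc (xs!0)" using x0 nx by auto
      then show ?thesis using dec by (auto simp: nth_Cons split: nat.splits)
    qed
  qed
qed

lemma edgeE: "{x,y} \<in> path_graph_E n \<Longrightarrow> y = Suc x \<or> x = Suc y"
  unfolding path_graph_E_def by (auto simp: doubleton_eq_iff)

lemma path_sub: "path_edges V (path_graph_E n) P \<Longrightarrow> P \<subseteq> path_graph_E n"
  unfolding path_edges_def by auto

lemma path_interval:
  assumes "path_edges V (path_graph_E n) P"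
  shows "\<exists>a b. P = {{j, Suc j} | j. a \<le> j \<and> j < b}"
proof -
  obtain xs where ne: "xs \<noteq> []" and d: "distinct xs"
    and ed: "\<forall>i. Suc i < length xs \<longrightarrow> {xs ! i, xs ! Suc i} \<in> path_graph_E n"
    and P: "P = {{xs ! i, xs ! Suc i} | i. Suc i < length xs}"
    using assms unfolding path_edges_def by blast
  have st: "\<forall>i. Suc i < length xs \<longrightarrow> (xs!Suc i = Suc (xs!i) \<or> xs!i = Suc (xs!Suc i))"
    using ed edgeE by blast
  define L where "L = length xs"
  from step_dir[OF d st] show ?thesis
  proof
    assume inc: "\<forall>i. Suc i < length xs \<longrightarrow> xs!Suc i = Suc (xs!i)"
    have xi: "i < length xs \<Longrightarrow> xs!i = xs!0 + i" for i
      by (induction i) (use inc in auto)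
    have "P = {{j, Suc j} | j. xs!0 \<le> j \<and> j < xs!0 + (L - 1)}"
    proof (rule set_eqI, rule iffI)
      fix e assume "e \<in> P"
      then obtain i where "Suc i < L" "e = {xs!i, xs!Suc i}" using P L_def by blast
      then show "e \<in> {{j, Suc j} | j. xs!0 \<le> j \<and> j < xs!0 + (L - 1)}"
        using xi[of i] xi[of "Suc i"] L_def by auto
    next
      fix e assume "e \<in> {{j, Suc j} | j. xs!0 \<le> j \<and> j < xs!0 + (L - 1)}"
      then obtain j where j: "xs!0 \<le> j" "j < xs!0 + (L - 1)" "e = {j, Suc j}" by blast
      define i where "i = j - xs!0"
      have "Suc i < L" "j = xs!0 + i" using j i_def by auto
      then show "e \<in> P" using xi[of i] xi[of "Suc i"] L_def P j(3) by auto
    qed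
    then show ?thesis by blast
  next
    assume dec: "\<forall>i. Suc i < length xs \<longrightarrow> xs!i = Suc (xs!Suc i)"
    have xi: "i < length xs \<Longrightarrow> xs!i + i = xs!0" for i
      by (induction i) (use dec in auto)
    have big: "L - 1 \<le> xs!0" using xi[of "L - 1"] ne L_def by auto
    have "P = {{j, Suc j} | j. xs!0 - (L - 1) \<le> j \<and> j < xs!0}"
    proof (rule set_eqI, rule iffI)
      fix e assume "e \<in> P"
      then obtain i where "Suc i < L" "e = {xs!i, xs!Suc i}" using P L_def by blast
      then show "e \<in> {{j, Suc j} | j. xs!0 - (L - 1) \<le> j \<and> j < xs!0}"
        using xi[of i] xi[of "Suc i"] L_def big
        by (auto simp: insert_commute intro!: exI[of _ "xs!Suc i"])
    next
      fix e assume "e \<in> {{j, Suc j} | j. xs!0 - (L - 1) \<le> j \<and> j < xs!0}"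
      then obtain j where j: "xs!0 - (L - 1) \<le> j" "j < xs!0" "e = {j, Suc j}" by blast
      define i where "i = xs!0 - Suc j"
      have "Suc i < L" "j = xs!0 - Suc i" using j i_def big ne L_def by auto
      then have "e = {xs!i, xs!Suc i}" using xi[of i] xi[of "Suc i"] L_def j(3) by (auto simp: insert_commute)
      then show "e \<in> P" using \<open>Suc i < L\<close> L_def P by auto
    qed
    then show ?thesis by blast
  qed
qed

definition bnd :: "nat set set \<Rightarrow> nat set" where
  "bnd P = {v. ({v - 1, v} \<in> P) \<noteq> ({v, Suc v} \<in> P)}"

lemma mem_I: "{v, Suc v} \<in> {{j, Suc j} | j. a \<le> j \<and> j < b} \<longleftrightarrow> a \<le> v \<and> v < b"
  by (auto simp: doubleton_eq_iff)

lemma mem_I0: "{0 - 1, 0::nat} \<notin> {{j, Suc j} | j. a \<le> j \<and> j < b}"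
  by (auto simp: doubleton_eq_iff)

lemma bnd_sub:
  assumes "P = {{j, Suc j} | j. a \<le> j \<and> j < b}"
  shows "bnd P \<subseteq> {a, b}"
proof
  fix v assume v: "v \<in> bnd P"
  show "v \<in> {a, b}"
  proof (cases v)
    case 0
    then show ?thesis using v assms mem_I0 mem_I[of 0 a b] unfolding bnd_def by auto
  next
    case (Suc w)
    then show ?thesis using v assms mem_I[of w a b] mem_I[of v a b] unfolding bnd_def by auto
  qed
qed

lemma bnd_path:
  assumes "path_edges V (path_graph_E n) P"
  shows "finite (bnd P) \<and> card (bnd P) \<le> 2"
proof -
  obtain a b where "P = {{j, Suc j} | j. a \<le> j \<and> j < b}" using path_interval[OF assms] by blast
  then have s: "bnd P \<subseteq> {a, b}" by (rule bnd_sub)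
  have "card {a, b} \<le> 2" by (cases "a = b") auto
  then show ?thesis using s card_mono[of "{a,b}" "bnd P"] finite_subset[OF s] by auto
qed

lemma E_mem: "{v, Suc v} \<in> path_graph_E n \<longleftrightarrow> Suc v < n"
  unfolding path_graph_E_def by (auto simp: doubleton_eq_iff)

lemma single_notE: "{x} \<notin> path_graph_E n"
  unfolding path_graph_E_def by (auto simp: doubleton_eq_iff)

lemma t1: "3 \<le> (n::nat) \<Longrightarrow> finite U \<Longrightarrow> {1..n-2} \<subseteq> U \<Longrightarrow> card U \<le> n - 2 \<Longrightarrow> 0 \<notin> U \<and> n - 1 \<notin> U"
proof -
  assume n: "3 \<le> (n::nat)" and finU: "finite U" and sub: "{1..n-2} \<subseteq> U" and c: "card U \<le> n - 2"
  have "card U \<le> card {1..n-2}" using c by simp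
  then have Ueq: "{1..n-2} = U" using card_seteq[OF finU sub] by simp
  show ?thesis using Ueq n by auto
qed
lemma t2: "3 \<le> (n::nat) \<Longrightarrow> P \<subseteq> path_graph_E n \<Longrightarrow> n - 1 \<notin> bnd P \<Longrightarrow> {n - 2, n - 1} \<notin> P"
proof -
  assume n: "3 \<le> (n::nat)" and s: "P \<subseteq> path_graph_E n" and b: "n - 1 \<notin> bnd P"
      have "{n - 1, Suc (n - 1)} \<notin> P" using s E_mem[of "n-1" n] by auto
      moreover have "n - 1 - 1 = n - 2" by simp
      ultimately show ?thesis using b unfolding bnd_def by auto
qed
lemma t3: "3 \<le> (n::nat) \<Longrightarrow> even n \<Longrightarrow> {0::nat, 1} \<noteq> {n - 2, n - 1} \<and> {n - 2, n - 1} \<in> path_graph_E n"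
proof -
  assume n: "3 \<le> (n::nat)" and ev: "even n"
    have b: "{n - 2, n - 1} \<in> path_graph_E n" using E_mem[of "n-2" n] n by (simp add: Suc_diff_Suc numeral_2_eq_2)
    have "n \<ge> 4" using n ev by presburger
    then show ?thesis using b by (auto simp: doubleton_eq_iff)
qed

lemma arithaux: "Suc c \<le> q \<Longrightarrow> n - 2 \<le> u \<Longrightarrow> u \<le> 2*c \<Longrightarrow> n = 2*q + r \<Longrightarrow> r < 2 \<Longrightarrow> 3 \<le> (n::nat) \<Longrightarrow> r = 0 \<and> 2*c = n-2"
  by linarith

lemma lower:
  assumes n: "n \<ge> 3" and fin: "finite PP" and sep: "separating_path_system (path_graph_V n) (path_graph_E n) PP"
  shows "n div 2 \<le> card PP"
proof -
  have paths: "\<And>P. P \<in> PP \<Longrightarrow> path_edges (path_graph_V n) (path_graph_E n) P"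
    and sp: "\<And>e e'. e \<in> path_graph_E n \<Longrightarrow> e' \<in> path_graph_E n \<Longrightarrow> e \<noteq> e' \<Longrightarrow> \<exists>P\<in>PP. (e \<in> P) \<noteq> (e' \<in> P)"
    using sep unfolding separating_path_system_def by auto
  define U where "U = (\<Union>P\<in>PP. bnd P)"
  have finU: "finite U" unfolding U_def using fin bnd_path[OF paths] by auto
  have "card U \<le> (\<Sum>P\<in>PP. card (bnd P))" unfolding U_def using card_UN_le[OF fin] by blast
  also have "\<dots> \<le> card PP * 2" using sum_bounded_above[of PP "\<lambda>P. card (bnd P)" 2] bnd_path[OF paths] by auto
  finally have cU: "card U \<le> 2 * card PP" by simp
  have sub: "{1..n-2} \<subseteq> U"
  proof
    fix v assume v: "v \<in> {1..n-2}"
    have e1: "{v - 1, v} \<in> path_graph_E n" using E_mem[of "v-1" n] v by auto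
    have e2: "{v, Suc v} \<in> path_graph_E n" using E_mem[of v n] v by auto
    have "{v - 1, v} \<noteq> {v, Suc v}" using v by (auto simp: doubleton_eq_iff)
    then obtain P where "P \<in> PP" "({v - 1, v} \<in> P) \<noteq> ({v, Suc v} \<in> P)" using sp[OF e1 e2] by blast
    then show "v \<in> U" unfolding U_def bnd_def by auto
  qed
  have c1: "n - 2 \<le> card U" using card_mono[OF finU sub] by simp
  show ?thesis
  proof (rule ccontr)
    assume "\<not> n div 2 \<le> card PP"
    then have lt: "2 * card PP < 2 * (n div 2)" by simp
    have nd: "n = 2 * (n div 2) + n mod 2" "n mod 2 < 2" by simp_all
    have lt2: "Suc (card PP) \<le> n div 2" using lt by simp
    have "n mod 2 = 0 \<and> 2 * card PP = n - 2"
      using arithaux[OF lt2 c1 cU nd n] .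
    then have r0: "n mod 2 = 0" and eq: "2 * card PP = n - 2" by auto
    have ev: "even n" using r0 by (simp add: even_iff_mod_2_eq_zero)
    have z: "0 \<notin> U \<and> n - 1 \<notin> U" using t1[OF n finU sub] cU eq by simp
    have no0: "{0, 1} \<notin> P" if "P \<in> PP" for P
    proof -
      have "0 \<notin> bnd P" using z that unfolding U_def by blast
      moreover have "{0} \<notin> P" using path_sub[OF paths[OF that]] single_notE[of 0 n] by blast
      ultimately show ?thesis unfolding bnd_def by simp
    qed
    have no1: "{n - 2, n - 1} \<notin> P" if "P \<in> PP" for P
    proof -
      have "n - 1 \<notin> bnd P" using z that unfolding U_def by blast
      then show ?thesis using t2[OF n path_sub[OF paths[OF that]]] by blast
    qed
    have a: "{0, 1} \<in> path_graph_E n" using E_mem[of 0 n] n by simp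
    have b: "{0::nat, 1} \<noteq> {n - 2, n - 1}" "{n - 2, n - 1} \<in> path_graph_E n" using t3[OF n ev] by auto
    obtain P where "P \<in> PP" "({0, 1} \<in> P) \<noteq> ({n - 2, n - 1} \<in> P)" using sp[OF a b(2) b(1)] by blast
    then show False using no0 no1 by blast
  qed
qed

definition W :: "nat \<Rightarrow> nat \<Rightarrow> nat set set" where
  "W k j = {{i, Suc i} | i. j \<le> i \<and> i < j + k}"

lemma W_path:
  assumes "j < k" "2 * k \<le> n"
  shows "path_edges (path_graph_V n) (path_graph_E n) (W k j)"
  unfolding path_edges_def
proof (intro exI conjI)
  let ?xs = "[j..<j + k + 1]"
  show "?xs \<noteq> []" "distinct ?xs" by auto
  show "set ?xs \<subseteq> path_graph_V n" using assms unfolding path_graph_V_def by auto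
  show "\<forall>i. Suc i < length ?xs \<longrightarrow> {?xs ! i, ?xs ! Suc i} \<in> path_graph_E n"
  proof (intro allI impI)
    fix i assume "Suc i < length ?xs"
    then show "{?xs ! i, ?xs ! Suc i} \<in> path_graph_E n"
      using assms E_mem[of "j+i" n] by (simp del: upt_Suc add: nth_upt)
  qed
  show "W k j = {{?xs ! i, ?xs ! Suc i} | i. Suc i < length ?xs}"
  proof (rule set_eqI, rule iffI)
    fix e assume "e \<in> W k j"
    then obtain i where i: "j \<le> i" "i < j + k" "e = {i, Suc i}" unfolding W_def by blast
    then have "Suc (i - j) < length ?xs" "e = {?xs ! (i - j), ?xs ! Suc (i - j)}" by (auto simp del: upt_Suc simp add: nth_upt)
    then show "e \<in> {{?xs ! i, ?xs ! Suc i} | i. Suc i < length ?xs}" by blast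
  next
    fix e assume "e \<in> {{?xs ! i, ?xs ! Suc i} | i. Suc i < length ?xs}"
    then obtain i where i: "Suc i < length ?xs" "e = {?xs ! i, ?xs ! Suc i}" by blast
    then have "e = {j + i, Suc (j + i)}" "j \<le> j + i" "j + i < j + k" by (auto simp del: upt_Suc simp add: nth_upt)
    then show "e \<in> W k j" unfolding W_def by blast
  qed
qed

lemma W_mem: "{i, Suc i} \<in> W k j \<longleftrightarrow> j \<le> i \<and> i < j + k"
  unfolding W_def by (auto simp: doubleton_eq_iff)

lemma sep_idx:
  assumes "i < i'" "Suc i' < n" "n \<le> 2 * k + 1"
  shows "\<exists>j<k. (j \<le> i \<and> i < j + k) \<noteq> (j \<le> i' \<and> i' < j + k)"
proof (cases "i' < k")
  case True
  then show ?thesis using assms by (intro exI[of _ i']) auto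
next
  case False
  show ?thesis
  proof (cases "i < k")
    case True
    then show ?thesis using assms False by (intro exI[of _ 0]) auto
  next
    case False
    then show ?thesis using assms by (intro exI[of _ "Suc i - k"]) auto
  qed
qed

lemma upper:
  assumes n: "n \<ge> 3"
  shows "\<exists>PP. finite PP \<and> card PP \<le> n div 2 \<and> separating_path_system (path_graph_V n) (path_graph_E n) PP"
proof -
  define k where "k = n div 2"
  define PP where "PP = W k ` {..<k}"
  have k2: "2 * k \<le> n" "n \<le> 2 * k + 1" unfolding k_def by auto
  have "finite PP" "card PP \<le> k" unfolding PP_def using card_image_le[of "{..<k}" "W k"] by auto
  moreover have "separating_path_system (path_graph_V n) (path_graph_E n) PP"
    unfolding separating_path_system_def
  proof (intro conjI ballI impI)
    fix P assume "P \<in> PP"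
    then show "path_edges (path_graph_V n) (path_graph_E n) P" unfolding PP_def using W_path k2 by auto
  next
    fix e e' assume e: "e \<in> path_graph_E n" and e': "e' \<in> path_graph_E n" and ne: "e \<noteq> e'"
    obtain i where i: "e = {i, Suc i}" "Suc i < n" using e unfolding path_graph_E_def by blast
    obtain i' where i': "e' = {i', Suc i'}" "Suc i' < n" using e' unfolding path_graph_E_def by blast
    have "i \<noteq> i'" using ne i i' by auto
    then have "i < i' \<or> i' < i" by arith
    then obtain j where j: "j < k" "(j \<le> i \<and> i < j + k) \<noteq> (j \<le> i' \<and> i' < j + k)"
      using sep_idx[of i i' n k] sep_idx[of i' i n k] i i' k2 by metis
    then have "W k j \<in> PP" "(e \<in> W k j) \<noteq> (e' \<in> W k j)" unfolding PP_def using i i' W_mem by auto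
    then show "\<exists>P\<in>PP. (e \<in> P) \<noteq> (e' \<in> P)" by blast
  qed
  ultimately show ?thesis unfolding k_def by blast
qed

theorem proposition7p2:
  fixes n :: nat
  assumes "n \<ge> 3"
  shows "f_sep (path_graph_V n) (path_graph_E n) = n div 2"
proof -
  define Q where "Q = (\<lambda>k. \<exists>\<P>. finite \<P> \<and> card \<P> = k \<and> separating_path_system (path_graph_V n) (path_graph_E n) \<P>)"
  obtain PP where PP: "finite PP" "card PP \<le> n div 2" "separating_path_system (path_graph_V n) (path_graph_E n) PP"
    using upper[OF assms] by blast
  have q: "Q (card PP)" unfolding Q_def using PP by blast
  have "Least Q \<le> card PP" by (rule Least_le[of Q, OF q])
  then have le: "Least Q \<le> n div 2" using PP(2) by (rule le_trans)
  have "Q (Least Q)" by (rule LeastI[of Q, OF q])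
  then obtain P2 where P2: "finite P2" "card P2 = Least Q" "separating_path_system (path_graph_V n) (path_graph_E n) P2"
    unfolding Q_def by blast
  have "n div 2 \<le> card P2" by (rule lower[OF assms P2(1) P2(3)])
  then have ge: "n div 2 \<le> Least Q" using P2(2) by simp
  have "f_sep (path_graph_V n) (path_graph_E n) = Least Q" unfolding f_sep_def Q_def by simp
  then show ?thesis using le ge by simp
qed

end
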